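(* Let $d_\mu,d_\lambda\ge 2$ be integers with $d_\mu<d_\lambda$, and let $a\in(0,1)$. Let $|\mu\rangle,|\bar\mu\rangle\in\mathbb{C}^{d_\mu}\otimes\mathbb{C}^{d_\mu}$ and $|\lambda\rangle,|\bar\lambda\rangle\in\mathbb{C}^{d_\lambda}\otimes\mathbb{C}^{d_\lambda}$ be states whose squared Schmidt coefficients are the normalizations of the following tuples: $$\mu\propto(1,a^{d_\lambda},a^{2d_\lambda},\dots,a^{(d_\mu-1)d_\lambda}),\quad \lambda\propto(1,a,a^2,\dots,a^{d_\lambda-1}),$$ $$\bar\mu\propto(1,a,a^2,\dots,a^{d_\mu-1}),\quad \bar\lambda\propto(1,a^{d_\mu},a^{2d_\mu},\dots,a^{(d_\lambda-1)d_\mu}).$$ Then $|\mu\rangle\otimes|\lambda\rangle$ can be transformed into $|\bar\mu\rangle\otimes|\bar\lambda\rangle$ by a local unitary, and this transformation is non-trivial: $|\bar\mu\rangle$ is not equal to $|\mu\rangle$ up to local unitaries.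
   Context: The state $|\mu\rangle\otimes|\lambda\rangle$ is regarded as a bipartite state between two parties, each holding a $d_\mu$-dimensional and a $d_\lambda$-dimensional subsystem. A local unitary is $U_A\otimes U_B$ with $U_A,U_B\in\mathrm{U}(d_\mu d_\lambda)$. *)

theory Defs
  imports Complex_Main "Jordan_Normal_Form.Matrix"
begin

text \<open>A pure bipartite state psi in C^m (x) C^n is represented by its coefficient matrix
  M (m x n), psi = sum_{i,j} M(i,j) |i>|j>.  A local unitary U (x) V acts as
  M |-> U * M * V^T.\<close>

definition adj_mat :: "complex mat \<Rightarrow> complex mat" where
  "adj_mat A = mat (dim_col A) (dim_row A) (\<lambda>(i,j). cnj (A $$ (j,i)))"

definition unitary_mat :: "nat \<Rightarrow> complex mat \<Rightarrow> bool" where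
  "unitary_mat n U \<longleftrightarrow> U \<in> carrier_mat n n \<and> U * adj_mat U = 1\<^sub>m n \<and> adj_mat U * U = 1\<^sub>m n"

text \<open>Kronecker product; the index (i,k) of the composite system corresponds to i * dim + k.\<close>
definition kron_mat :: "complex mat \<Rightarrow> complex mat \<Rightarrow> complex mat" where
  "kron_mat A B = mat (dim_row A * dim_row B) (dim_col A * dim_col B)
     (\<lambda>(i,j). A $$ (i div dim_row B, j div dim_col B) * B $$ (i mod dim_row B, j mod dim_col B))"

definition LU_equiv :: "nat \<Rightarrow> nat \<Rightarrow> complex mat \<Rightarrow> complex mat \<Rightarrow> bool" where
  "LU_equiv m n M N \<longleftrightarrow> (\<exists>U V. unitary_mat m U \<and> unitary_mat n V \<and> U * M * transpose_mat V = N)"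

text \<open>M in C^d (x) C^d has squared Schmidt coefficients p 0, ..., p (d-1):
  M = sum_i sqrt(p i) e_i (x) f_i with orthonormal bases (e_i), (f_i).\<close>
definition has_sq_schmidt :: "nat \<Rightarrow> complex mat \<Rightarrow> (nat \<Rightarrow> real) \<Rightarrow> bool" where
  "has_sq_schmidt d M p \<longleftrightarrow> M \<in> carrier_mat d d \<and>
     (\<exists>U V. unitary_mat d U \<and> unitary_mat d V \<and>
        M = U * mat_diag d (\<lambda>i. complex_of_real (sqrt (p i))) * transpose_mat V)"

definition normalized :: "nat \<Rightarrow> (nat \<Rightarrow> real) \<Rightarrow> nat \<Rightarrow> real" where
  "normalized d t i = t i / (\<Sum>j<d. t j)"

end

theory Submission
  imports Defs
begin

lemma adj_carrier[simp]: "adj_mat A \<in> carrier_mat (dim_col A) (dim_row A)"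
  "dim_row (adj_mat A) = dim_col A" "dim_col (adj_mat A) = dim_row A"
  by (auto simp: adj_mat_def)

lemma adj_carrier': "A \<in> carrier_mat n m \<Longrightarrow> adj_mat A \<in> carrier_mat m n"
  by (metis adj_carrier(2) adj_carrier(3) carrier_matD(1) carrier_matD(2) carrier_matI)

lemma index_adj[simp]: "i < dim_col A \<Longrightarrow> j < dim_row A \<Longrightarrow> adj_mat A $$ (i,j) = cnj (A $$ (j,i))"
  by (auto simp: adj_mat_def)

lemma adj_adj[simp]: "adj_mat (adj_mat A) = A"
  by (rule eq_matI) auto

lemma adj_mult: "A \<in> carrier_mat n k \<Longrightarrow> B \<in> carrier_mat k m \<Longrightarrow> adj_mat (A * B) = adj_mat B * adj_mat A"
  by (rule eq_matI) (auto simp: scalar_prod_def mult.commute)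

lemma adj_one[simp]: "adj_mat (1\<^sub>m n) = 1\<^sub>m n"
  by (rule eq_matI) auto

lemma adj_transpose: "adj_mat (transpose_mat A) = transpose_mat (adj_mat A)"
  by (rule eq_matI) auto

lemma mult_cn[simp]: "A \<in> carrier_mat n n \<Longrightarrow> B \<in> carrier_mat n n \<Longrightarrow> A * B \<in> carrier_mat n n"
  by auto

lemma unitary_carrier: "unitary_mat n U \<Longrightarrow> U \<in> carrier_mat n n"
  by (simp add: unitary_mat_def)

lemma unitary_adj: "unitary_mat n U \<Longrightarrow> unitary_mat n (adj_mat U)"
  by (auto simp: unitary_mat_def)

lemma unitary_mult: assumes "unitary_mat n A" "unitary_mat n B" shows "unitary_mat n (A * B)"
proof -
  have A: "A \<in> carrier_mat n n" and B: "B \<in> carrier_mat n n" using assms unitary_carrier by auto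
  have aA: "adj_mat A \<in> carrier_mat n n" and aB: "adj_mat B \<in> carrier_mat n n" using A B adj_carrier' by auto
  have e: "adj_mat (A*B) = adj_mat B * adj_mat A" using adj_mult A B by blast
  have "A * B * (adj_mat B * adj_mat A) = A * (B * adj_mat B) * adj_mat A"
    using A B aA aB by (simp add: assoc_mult_mat[of _ n n _ n _ n])
  also have "\<dots> = 1\<^sub>m n" using assms A by (simp add: unitary_mat_def)
  finally have 1: "A * B * adj_mat (A*B) = 1\<^sub>m n" using e by simp
  have "adj_mat B * adj_mat A * (A * B) = adj_mat B * (adj_mat A * A) * B"
    using A B aA aB by (simp add: assoc_mult_mat[of _ n n _ n _ n])
  also have "\<dots> = 1\<^sub>m n" using assms B by (simp add: unitary_mat_def)
  finally have 2: "adj_mat (A*B) * (A * B) = 1\<^sub>m n" using e by simp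
  show ?thesis using 1 2 A B by (simp add: unitary_mat_def)
qed

lemma unitary_transpose: assumes "unitary_mat n U" shows "unitary_mat n (transpose_mat U)"
proof -
  have U: "U \<in> carrier_mat n n" using assms unitary_carrier by auto
  have aU: "adj_mat U \<in> carrier_mat n n" using U adj_carrier' by auto
  have "transpose_mat U * adj_mat (transpose_mat U) = transpose_mat (adj_mat U * U)"
    using U aU by (simp add: adj_transpose transpose_mult[of "adj_mat U" n n U n])
  moreover have "adj_mat (transpose_mat U) * transpose_mat U = transpose_mat (U * adj_mat U)"
    using U aU by (simp add: adj_transpose transpose_mult[of U n n "adj_mat U" n])
  ultimately show ?thesis using assms U by (simp add: unitary_mat_def)
qed

lemma sum_div_mod: "(\<Sum>k<n*m. f k) = (\<Sum>a<n. \<Sum>c<m. f (a*m+c :: nat))"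
proof (induction n)
  case 0 then show ?case by simp
next
  case (Suc n)
  have "{..<Suc n * m} = {..<n*m} \<union> {n*m..<n*m+m}" by auto
  then have "(\<Sum>k<Suc n*m. f k) = sum f ({..<n*m} \<union> {n*m..<n*m+m})" by simp
  also have "\<dots> = (\<Sum>k<n*m. f k) + (\<Sum>k\<in>{n*m..<n*m+m}. f k)"
    by (rule sum.union_disjoint) auto
  also have "(\<Sum>k\<in>{n*m..<n*m+m}. f k) = (\<Sum>c<m. f (n*m+c))"
    by (rule sum.reindex_bij_witness[of _ "\<lambda>c. n*m+c" "\<lambda>k. k - n*m"]) auto
  finally show ?case using Suc by simp
qed


lemma kron_dims[simp]: "dim_row (kron_mat A B) = dim_row A * dim_row B"
  "dim_col (kron_mat A B) = dim_col A * dim_col B"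
  by (auto simp: kron_mat_def)

lemma kron_carrier: "A \<in> carrier_mat n1 m1 \<Longrightarrow> B \<in> carrier_mat n2 m2 \<Longrightarrow> kron_mat A B \<in> carrier_mat (n1*n2) (m1*m2)"
  by (metis carrier_matD(1) carrier_matD(2) carrier_matI kron_dims(1) kron_dims(2))

lemma index_kron[simp]: "i < dim_row A * dim_row B \<Longrightarrow> j < dim_col A * dim_col B \<Longrightarrow>
  kron_mat A B $$ (i,j) = A $$ (i div dim_row B, j div dim_col B) * B $$ (i mod dim_row B, j mod dim_col B)"
  by (auto simp: kron_mat_def)

lemma div_lt: "i < n1 * (n2::nat) \<Longrightarrow> i div n2 < n1"
  by (simp add: less_mult_imp_div_less)

lemma mod_lt: "i < n1 * (n2::nat) \<Longrightarrow> i mod n2 < n2"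
  by (metis mod_less_divisor mult_0_right not_less_zero gr0I)

lemma kron_mult:
  assumes A: "A \<in> carrier_mat n1 k1" and B: "B \<in> carrier_mat k1 m1"
    and C: "C \<in> carrier_mat n2 k2" and D: "D \<in> carrier_mat k2 m2"
  shows "kron_mat (A * B) (C * D) = kron_mat A C * kron_mat B D"
proof (rule eq_matI)
  fix i j assume i: "i < dim_row (kron_mat A C * kron_mat B D)" and j: "j < dim_col (kron_mat A C * kron_mat B D)"
  have i': "i < n1 * n2" and j': "j < m1 * m2" using i j A B C D by auto
  have i1: "i div n2 < n1" and i2: "i mod n2 < n2" using i' div_lt mod_lt by auto
  have j1: "j div m2 < m1" and j2: "j mod m2 < m2" using j' div_lt mod_lt by auto
  have "(kron_mat A C * kron_mat B D) $$ (i,j) =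
      (\<Sum>k<k1*k2. A $$ (i div n2, k div k2) * C $$ (i mod n2, k mod k2) * (B $$ (k div k2, j div m2) * D $$ (k mod k2, j mod m2)))"
    using i' j' A B C D div_lt mod_lt
    by (auto simp: scalar_prod_def lessThan_atLeast0 intro!: sum.cong)
  also have "\<dots> = (\<Sum>a<k1. \<Sum>c<k2. A $$ (i div n2, a) * C $$ (i mod n2, c) * (B $$ (a, j div m2) * D $$ (c, j mod m2)))"
    by (subst sum_div_mod) (auto intro!: sum.cong)
  also have "\<dots> = (\<Sum>a<k1. A $$ (i div n2, a) * B $$ (a, j div m2)) * (\<Sum>c<k2. C $$ (i mod n2, c) * D $$ (c, j mod m2))"
    by (simp add: sum_product mult_ac)
  also have "\<dots> = kron_mat (A * B) (C * D) $$ (i,j)"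
    using i1 i2 j1 j2 i' j' A B C D by (simp add: scalar_prod_def lessThan_atLeast0)
  finally show "kron_mat (A * B) (C * D) $$ (i,j) = (kron_mat A C * kron_mat B D) $$ (i,j)" by simp
qed (use A B C D in auto)

lemma kron_transpose: "transpose_mat (kron_mat A B) = kron_mat (transpose_mat A) (transpose_mat B)"
proof (rule eq_matI)
  fix i j assume "i < dim_row (kron_mat (transpose_mat A) (transpose_mat B))" "j < dim_col (kron_mat (transpose_mat A) (transpose_mat B))"
  then have i: "i < dim_col A * dim_col B" and j: "j < dim_row A * dim_row B" by (simp_all add: adj_carrier)
  show "transpose_mat (kron_mat A B) $$ (i, j) = kron_mat (transpose_mat A) (transpose_mat B) $$ (i, j)"
    using i j div_lt[OF i] mod_lt[OF i] div_lt[OF j] mod_lt[OF j] by (simp add: adj_carrier)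
qed (simp_all add: adj_carrier)

lemma kron_adj: "adj_mat (kron_mat A B) = kron_mat (adj_mat A) (adj_mat B)"
proof (rule eq_matI)
  fix i j assume "i < dim_row (kron_mat (adj_mat A) (adj_mat B))" "j < dim_col (kron_mat (adj_mat A) (adj_mat B))"
  then have i: "i < dim_col A * dim_col B" and j: "j < dim_row A * dim_row B" by (simp_all add: adj_carrier)
  show "adj_mat (kron_mat A B) $$ (i, j) = kron_mat (adj_mat A) (adj_mat B) $$ (i, j)"
    using i j div_lt[OF i] mod_lt[OF i] div_lt[OF j] mod_lt[OF j] by (simp add: adj_carrier)
qed (simp_all add: adj_carrier)

lemma kron_one: "kron_mat (1\<^sub>m n) (1\<^sub>m m) = 1\<^sub>m (n*m)"
proof (rule eq_matI)
  fix i j assume "i < dim_row (1\<^sub>m (n * m))" "j < dim_col (1\<^sub>m (n * m))"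
  then have i: "i < n*m" and j: "j < n*m" by auto
  have "(i div m = j div m \<and> i mod m = j mod m) = (i = j)"
    by (metis div_mult_mod_eq)
  then show "kron_mat (1\<^sub>m n) (1\<^sub>m m) $$ (i, j) = 1\<^sub>m (n * m) $$ (i, j)"
    using i j div_lt mod_lt by auto
qed auto

lemma unitary_kron: assumes "unitary_mat n U" "unitary_mat m V" shows "unitary_mat (n*m) (kron_mat U V)"
proof -
  have U: "U \<in> carrier_mat n n" and V: "V \<in> carrier_mat m m" using assms unitary_carrier by auto
  have aU: "adj_mat U \<in> carrier_mat n n" and aV: "adj_mat V \<in> carrier_mat m m" using U V adj_carrier' by auto
  have "kron_mat U V * adj_mat (kron_mat U V) = kron_mat (U * adj_mat U) (V * adj_mat V)"
    using U V aU aV by (simp add: kron_adj kron_mult[of U n n "adj_mat U" n V m m "adj_mat V" m])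
  moreover have "adj_mat (kron_mat U V) * kron_mat U V = kron_mat (adj_mat U * U) (adj_mat V * V)"
    using U V aU aV by (simp add: kron_adj kron_mult[of "adj_mat U" n n U n "adj_mat V" m m V m])
  ultimately show ?thesis using assms kron_carrier[OF U V] by (simp add: unitary_mat_def kron_one)
qed

lemma kron_diag: "kron_mat (mat_diag n f) (mat_diag m g) = mat_diag (n*m) (\<lambda>k. f (k div m) * g (k mod m))"
proof (rule eq_matI)
  fix i j assume "i < dim_row (mat_diag (n*m) (\<lambda>k. f (k div m) * g (k mod m)))"
     "j < dim_col (mat_diag (n*m) (\<lambda>k. f (k div m) * g (k mod m)))"
  then have i: "i < n*m" and j: "j < n*m" by (auto simp: mat_diag_def)
  have "(i div m = j div m \<and> i mod m = j mod m) = (i = j)"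
    by (metis div_mult_mod_eq)
  then show "kron_mat (mat_diag n f) (mat_diag m g) $$ (i, j) = mat_diag (n*m) (\<lambda>k. f (k div m) * g (k mod m)) $$ (i, j)"
    using i j div_lt mod_lt by (auto simp: mat_diag_def)
qed (auto simp: mat_diag_def)


definition perm_mat :: "nat \<Rightarrow> (nat \<Rightarrow> nat) \<Rightarrow> complex mat" where
  "perm_mat n \<sigma> = mat n n (\<lambda>(i,j). if j = \<sigma> i then 1 else 0)"

lemma perm_carrier[simp]: "perm_mat n \<sigma> \<in> carrier_mat n n" "dim_row (perm_mat n \<sigma>) = n" "dim_col (perm_mat n \<sigma>) = n"
  by (auto simp: perm_mat_def)

lemma sum_ind2: "a < (n::nat) \<Longrightarrow> (\<Sum>k<n. (if k = a then 1 else 0) * (if k = b then 1 else 0) :: complex) = (if a = b then 1 else 0)"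
proof -
  assume a: "a < n"
  have "(\<Sum>k<n. (if k = a then 1 else 0) * (if k = b then 1 else 0) :: complex) = (\<Sum>k<n. if k = a then (if a = b then 1 else 0) else 0)"
    by (rule sum.cong) auto
  also have "\<dots> = (if a = b then 1 else 0)" using a by simp
  finally show ?thesis .
qed

lemma perm_unitary: assumes bij: "bij_betw \<sigma> {..<n} {..<n}" shows "unitary_mat n (perm_mat n \<sigma>)"
proof -
  let ?P = "perm_mat n \<sigma>"
  have adjP: "adj_mat ?P = transpose_mat ?P" by (rule eq_matI) (auto simp: perm_mat_def)
  have sl: "\<sigma> i < n" if "i < n" for i using bij that by (auto simp: bij_betw_def)
  have inj: "\<sigma> i = \<sigma> j \<longleftrightarrow> i = j" if "i < n" "j < n" for i j
    using bij that by (auto simp: bij_betw_def inj_on_def)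
  have 1: "?P * adj_mat ?P = 1\<^sub>m n"
  proof (rule eq_matI)
    fix i j assume "i < dim_row (1\<^sub>m n)" "j < dim_col (1\<^sub>m n)"
    then have i: "i < n" and j: "j < n" by auto
    have "(?P * adj_mat ?P) $$ (i,j) = (\<Sum>k<n. (if k = \<sigma> i then 1 else 0) * (if k = \<sigma> j then 1 else 0))"
      unfolding adjP using i j by (auto simp: scalar_prod_def perm_mat_def lessThan_atLeast0 intro!: sum.cong)
    also have "\<dots> = (if \<sigma> i = \<sigma> j then 1 else 0)" using sum_ind2 sl i by blast
    finally show "(?P * adj_mat ?P) $$ (i,j) = 1\<^sub>m n $$ (i,j)" using inj i j by simp
  qed auto
  have 2: "adj_mat ?P * ?P = 1\<^sub>m n"
  proof (rule eq_matI)
    fix i j assume "i < dim_row (1\<^sub>m n)" "j < dim_col (1\<^sub>m n)"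
    then have i: "i < n" and j: "j < n" by auto
    have "(adj_mat ?P * ?P) $$ (i,j) = (\<Sum>k<n. (\<lambda>k'. (if k' = i then 1 else 0) * (if k' = j then 1 else 0)) (\<sigma> k))"
      unfolding adjP using i j by (auto simp: scalar_prod_def perm_mat_def lessThan_atLeast0 intro!: sum.cong)
    also have "\<dots> = (\<Sum>k'<n. (if k' = i then 1 else 0) * (if k' = j then 1 else 0))"
      by (rule sum.reindex_bij_betw[OF bij, of "\<lambda>k'. (if k' = i then 1 else 0) * (if k' = j then 1 else 0)"])
    also have "\<dots> = (if i = j then 1 else 0)" using sum_ind2 i by blast
    finally show "(adj_mat ?P * ?P) $$ (i,j) = 1\<^sub>m n $$ (i,j)" using i j by simp
  qed auto
  show ?thesis using 1 2 by (simp add: unitary_mat_def)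
qed

lemma perm_diag: assumes bij: "bij_betw \<sigma> {..<n} {..<n}"
  shows "perm_mat n \<sigma> * mat_diag n f * transpose_mat (perm_mat n \<sigma>) = mat_diag n (\<lambda>k. f (\<sigma> k))"
proof (rule eq_matI)
  let ?P = "perm_mat n \<sigma>"
  have sl: "\<sigma> i < n" if "i < n" for i using bij that by (auto simp: bij_betw_def)
  have inj: "\<sigma> i = \<sigma> j \<longleftrightarrow> i = j" if "i < n" "j < n" for i j
    using bij that by (auto simp: bij_betw_def inj_on_def)
  fix i j assume "i < dim_row (mat_diag n (\<lambda>k. f (\<sigma> k)))" "j < dim_col (mat_diag n (\<lambda>k. f (\<sigma> k)))"
  then have i: "i < n" and j: "j < n" by (auto simp: mat_diag_def)
  have e: "?P * mat_diag n f = mat n n (\<lambda>(i,j). ?P $$ (i,j) * f j)"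
    by (rule mat_diag_mult_right) simp
  have "(?P * mat_diag n f * transpose_mat ?P) $$ (i,j) = (\<Sum>k<n. (if k = \<sigma> i then 1 else 0) * (if k = \<sigma> j then 1 else 0) * f k)"
    unfolding e using i j by (auto simp: scalar_prod_def perm_mat_def lessThan_atLeast0 intro!: sum.cong)
  also have "\<dots> = (\<Sum>k<n. if k = \<sigma> i then (if \<sigma> i = \<sigma> j then f (\<sigma> i) else 0) else 0)"
    by (rule sum.cong) auto
  also have "\<dots> = (if i = j then f (\<sigma> i) else 0)" using sl[OF i] inj[OF i j] by simp
  finally show "(?P * mat_diag n f * transpose_mat ?P) $$ (i,j) = mat_diag n (\<lambda>k. f (\<sigma> k)) $$ (i,j)"
    using i j by (simp add: mat_diag_def)
qed (auto simp: mat_diag_def)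


lemma adj_diag: "adj_mat (mat_diag n f) = mat_diag n (\<lambda>i. cnj (f i))"
  by (rule eq_matI) (auto simp: mat_diag_def)

lemma one_l: "(A::complex mat) \<in> carrier_mat n n \<Longrightarrow> 1\<^sub>m n * A = A" by (rule left_mult_one_mat)
lemma one_r: "(A::complex mat) \<in> carrier_mat n n \<Longrightarrow> A * 1\<^sub>m n = A" by (rule right_mult_one_mat)

lemma unitary_facts: assumes "unitary_mat n X"
  shows "X \<in> carrier_mat n n" "adj_mat X \<in> carrier_mat n n" "X * adj_mat X = 1\<^sub>m n" "adj_mat X * X = 1\<^sub>m n"
  using assms adj_carrier' by (auto simp: unitary_mat_def)

lemma L_inv: assumes X: "unitary_mat n X" and A: "A \<in> carrier_mat n n" and B: "B = X * A * adj_mat X"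
  shows "adj_mat X * B * X = A"
proof -
  note f = unitary_facts[OF X]
  have "adj_mat X * B * X = (adj_mat X * X) * A * (adj_mat X * X)"
    unfolding B using f(1,2) A by (simp add: assoc_mult_mat[of _ n n _ n _ n])
  also have "\<dots> = A" using f A by (simp only: f one_l one_r mult_cn)
  finally show ?thesis .
qed

lemma L_comm: assumes X: "unitary_mat n X" and A: "A \<in> carrier_mat n n" and B: "B = X * A * adj_mat X"
  shows "B * X = X * A"
proof -
  note f = unitary_facts[OF X]
  have "B * X = X * A * (adj_mat X * X)"
    unfolding B using f(1,2) A by (simp add: assoc_mult_mat[of _ n n _ n _ n])
  also have "\<dots> = X * A" using f A by (simp only: f one_l one_r mult_cn)
  finally show ?thesis .
qed

lemma L_chain: assumes X: "unitary_mat n X" and Z: "unitary_mat n Z" and A: "A \<in> carrier_mat n n"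
  and B: "B = X * A * adj_mat X" and C: "C = Z * B * adj_mat Z"
  shows "C = (Z * X) * A * adj_mat (Z * X)"
proof -
  note f = unitary_facts[OF X] and g = unitary_facts[OF Z]
  have "adj_mat (Z * X) = adj_mat X * adj_mat Z" using adj_mult f g by blast
  then show ?thesis unfolding C B using f(1,2) g(1,2) A by (simp add: assoc_mult_mat[of _ n n _ n _ n])
qed

lemma L_conj2: assumes X: "unitary_mat n X" and Y: "unitary_mat n Y" and M: "M \<in> carrier_mat n n"
  shows "(X * M * Y) * adj_mat (X * M * Y) = X * (M * adj_mat M) * adj_mat X"
proof -
  note f = unitary_facts[OF X] and g = unitary_facts[OF Y]
  have aM: "adj_mat M \<in> carrier_mat n n" using M adj_carrier' by blast
  have "adj_mat (X * M * Y) = adj_mat Y * adj_mat (X * M)" using adj_mult f g M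
    by (meson mult_cn)
  also have "adj_mat (X * M) = adj_mat M * adj_mat X" using adj_mult f M by blast
  finally have e: "adj_mat (X * M * Y) = adj_mat Y * (adj_mat M * adj_mat X)" .
  have "(X * M * Y) * adj_mat (X * M * Y) = X * M * (Y * adj_mat Y) * adj_mat M * adj_mat X"
    unfolding e using f(1,2) g(1,2) M aM by (simp add: assoc_mult_mat[of _ n n _ n _ n])
  also have "\<dots> = X * M * adj_mat M * adj_mat X"
    using f g M aM by (simp only: f g one_l one_r mult_cn)
  also have "\<dots> = X * (M * adj_mat M) * adj_mat X"
    using f(1,2) g(1,2) M aM by (simp add: assoc_mult_mat[of _ n n _ n _ n])
  finally show ?thesis .
qed

lemma gram_schmidt: assumes "has_sq_schmidt n M p" "\<forall>i<n. p i \<ge> 0"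
  shows "\<exists>U. unitary_mat n U \<and> M * adj_mat M = U * mat_diag n (\<lambda>i. complex_of_real (p i)) * adj_mat U"
proof -
  obtain U V where U: "unitary_mat n U" and V: "unitary_mat n V" and
     M: "M = U * mat_diag n (\<lambda>i. complex_of_real (sqrt (p i))) * transpose_mat V"
    using assms(1) unfolding has_sq_schmidt_def by blast
  let ?D = "mat_diag n (\<lambda>i. complex_of_real (sqrt (p i)))"
  have W: "unitary_mat n (transpose_mat V)" using V unitary_transpose by blast
  have "M * adj_mat M = U * (?D * adj_mat ?D) * adj_mat U"
    unfolding M by (rule L_conj2[OF U W]) simp
  also have "?D * adj_mat ?D = mat_diag n (\<lambda>i. complex_of_real (p i))"
  proof -
    have "?D * adj_mat ?D = mat_diag n (\<lambda>i. complex_of_real (sqrt (p i)) * cnj (complex_of_real (sqrt (p i))))"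
      by (simp add: adj_diag)
    also have "\<dots> = mat_diag n (\<lambda>i. complex_of_real (p i))"
      using assms(2) by (auto simp: mat_diag_def simp flip: of_real_mult intro!: eq_matI)
    finally show ?thesis .
  qed
  finally show ?thesis using U by blast
qed

lemma not_LU: assumes M: "has_sq_schmidt n M p" and N: "has_sq_schmidt n N q"
  and p: "\<forall>i<n. p i \<ge> 0" and q: "\<forall>i<n. q i \<ge> 0" and n: "0 < n"
  and ne: "\<forall>k<n. q k \<noteq> p 0"
  shows "\<not> LU_equiv n n M N"
proof
  assume "LU_equiv n n M N"
  then obtain U V where U: "unitary_mat n U" and V: "unitary_mat n V" and e: "U * M * transpose_mat V = N"
    unfolding LU_equiv_def by blast
  define Ep where "Ep = mat_diag n (\<lambda>i. complex_of_real (p i))"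
  define Eq where "Eq = mat_diag n (\<lambda>i. complex_of_real (q i))"
  obtain U1 where U1: "unitary_mat n U1" and G: "M * adj_mat M = U1 * Ep * adj_mat U1"
    using gram_schmidt[OF M p] unfolding Ep_def by blast
  obtain U3 where U3: "unitary_mat n U3" and H: "N * adj_mat N = U3 * Eq * adj_mat U3"
    using gram_schmidt[OF N q] unfolding Eq_def by blast
  have Mc: "M \<in> carrier_mat n n" using M by (auto simp: has_sq_schmidt_def)
  have Mc2: "M * adj_mat M \<in> carrier_mat n n" using Mc adj_carrier' by (meson mult_cn)
  have Ec: "Ep \<in> carrier_mat n n" "Eq \<in> carrier_mat n n" unfolding Ep_def Eq_def by auto
  have W: "unitary_mat n (transpose_mat V)" using V unitary_transpose by blast
  have H2: "N * adj_mat N = U * (M * adj_mat M) * adj_mat U"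
    unfolding e[symmetric] by (rule L_conj2[OF U W Mc])
  have a1: "adj_mat U3 * (N * adj_mat N) * U3 = Eq" by (rule L_inv[OF U3 Ec(2) H])
  have U3': "unitary_mat n (adj_mat U3)" using U3 unitary_adj by blast
  have b1: "N * adj_mat N = (U * U1) * Ep * adj_mat (U * U1)"
    by (rule L_chain[OF U1 U Ec(1) G H2])
  have b2: "Eq = (adj_mat U3 * (U * U1)) * Ep * adj_mat (adj_mat U3 * (U * U1))"
    by (rule L_chain[OF unitary_mult[OF U U1] U3' Ec(1) b1]) (use a1 in simp)
  define X where "X = adj_mat U3 * (U * U1)"
  have XU: "unitary_mat n X" unfolding X_def
    using unitary_mult U3' U U1 by blast
  have Xc: "X \<in> carrier_mat n n" using XU unitary_carrier by blast
  have comm: "Eq * X = X * Ep" by (rule L_comm[OF XU Ec(1) b2[folded X_def]])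
  have "(adj_mat X * X) $$ (0,0) = 1" using XU n by (simp add: unitary_mat_def)
  moreover have "(adj_mat X * X) $$ (0,0) = (\<Sum>k<n. cnj (X $$ (k,0)) * X $$ (k,0))"
    using Xc n by (auto simp: scalar_prod_def lessThan_atLeast0 intro!: sum.cong)
  ultimately obtain k where k: "k < n" "X $$ (k,0) \<noteq> 0"
    by (metis (no_types, lifting) mult_zero_right sum.neutral zero_neq_one lessThan_iff)
  have "(Eq * X) $$ (k,0) = complex_of_real (q k) * X $$ (k,0)"
    using Xc k n by (simp add: Eq_def mat_diag_mult_left[of _ n])
  moreover have "(X * Ep) $$ (k,0) = X $$ (k,0) * complex_of_real (p 0)"
    using Xc k n by (simp add: Ep_def mat_diag_mult_right[of _ n])
  ultimately have "complex_of_real (q k) = complex_of_real (p 0)" using comm k by simp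
  then show False using ne k by simp
qed

lemma mat_diag_cong: "(\<And>k. k < n \<Longrightarrow> f k = g k) \<Longrightarrow> mat_diag n f = mat_diag n g"
  by (rule eq_matI) (auto simp: mat_diag_def)

lemma sigma_bij: fixes dla dmu :: nat assumes "0 < dla"
  shows "bij_betw (\<lambda>k. k div dla + k mod dla * dmu) {..<dmu*dla} {..<dmu*dla}"
proof -
  let ?s = "\<lambda>k. k div dla + k mod dla * dmu"
  have rng: "?s k < dmu*dla" if k: "k < dmu*dla" for k
  proof -
    have i: "k div dla < dmu" and j: "k mod dla < dla" using div_lt[OF k] mod_lt[OF k] by auto
    have "?s k < Suc (k mod dla) * dmu" using i by simp
    also have "\<dots> \<le> dla * dmu" using j by (intro mult_le_mono1) simp
    finally show ?thesis by (simp add: mult.commute)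
  qed
  have inj: "inj_on ?s {..<dmu*dla}"
  proof (rule inj_onI)
    fix k k' assume k: "k \<in> {..<dmu*dla}" and k': "k' \<in> {..<dmu*dla}" and e: "?s k = ?s k'"
    have i: "k div dla < dmu" and i': "k' div dla < dmu" using div_lt[of k dmu dla] div_lt[of k' dmu dla] k k' by auto
    have "?s k mod dmu = k div dla" using i by simp
    moreover have "?s k' mod dmu = k' div dla" using i' by simp
    ultimately have 1: "k div dla = k' div dla" using e by simp
    have "?s k div dmu = k mod dla" using i by simp
    moreover have "?s k' div dmu = k' mod dla" using i' by simp
    ultimately have 2: "k mod dla = k' mod dla" using e by simp
    show "k = k'" using 1 2 by (metis div_mult_mod_eq)
  qed
  have "?s ` {..<dmu*dla} = {..<dmu*dla}"
    by (rule endo_inj_surj) (use rng inj in auto)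
  then show ?thesis using inj by (simp add: bij_betw_def)
qed

lemma Zprod: "(\<Sum>i<n. (a::real) ^ (i * m)) * (\<Sum>j<m. a ^ j) = (\<Sum>k<n*m. a ^ k)"
  by (simp add: sum_div_mod sum_product power_add)

lemma sqrt_prod: assumes "0 \<le> x" "0 \<le> y"
  shows "complex_of_real (sqrt (x / Z1)) * complex_of_real (sqrt (y / Z2)) = complex_of_real (sqrt (x * y / (Z1 * Z2)))"
  by (simp flip: of_real_mult real_sqrt_mult)

lemma Zlt: assumes "0 < a" "a < (1::real)" "2 \<le> dmu" "2 \<le> dla"
  shows "(\<Sum>i<dmu. a ^ (i * dla)) < (\<Sum>i<dmu. a ^ i)"
proof (rule sum_strict_mono_ex1)
  show "\<forall>x\<in>{..<dmu}. a ^ (x * dla) \<le> a ^ x"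
    using assms by (auto intro!: power_decreasing)
  show "\<exists>x\<in>{..<dmu}. a ^ (x * dla) < a ^ x"
    using assms power_strict_decreasing[of 1 dla a] by (intro bexI[of _ 1]) auto
qed simp


lemma kron_schmidt:
  assumes U1: "unitary_mat m U1" and V1: "unitary_mat m V1" and U2: "unitary_mat n U2" and V2: "unitary_mat n V2"
  shows "kron_mat (U1 * mat_diag m f * transpose_mat V1) (U2 * mat_diag n g * transpose_mat V2)
     = kron_mat U1 U2 * kron_mat (mat_diag m f) (mat_diag n g) * transpose_mat (kron_mat V1 V2)"
proof -
  have c: "U1 \<in> carrier_mat m m" "V1 \<in> carrier_mat m m" "U2 \<in> carrier_mat n n" "V2 \<in> carrier_mat n n"
    using assms unitary_carrier by auto
  have "kron_mat (U1 * mat_diag m f * transpose_mat V1) (U2 * mat_diag n g * transpose_mat V2)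
     = kron_mat (U1 * mat_diag m f) (U2 * mat_diag n g) * kron_mat (transpose_mat V1) (transpose_mat V2)"
    using c by (intro kron_mult[of _ m m _ m _ n n _ n]) auto
  also have "kron_mat (U1 * mat_diag m f) (U2 * mat_diag n g) = kron_mat U1 U2 * kron_mat (mat_diag m f) (mat_diag n g)"
    using c by (intro kron_mult[of _ m m _ m _ n n _ n]) auto
  finally show ?thesis by (simp add: kron_transpose)
qed

theorem mainTheorem9:
  fixes dmu dla :: nat and a :: real
    and Mmu Mla Mmub Mlab :: "complex mat"
  assumes "dmu \<ge> 2" and "dla \<ge> 2" and "dmu < dla"
    and "0 < a" and "a < 1"
    and "has_sq_schmidt dmu Mmu (normalized dmu (\<lambda>i. a ^ (i * dla)))"
    and "has_sq_schmidt dla Mla (normalized dla (\<lambda>i. a ^ i))"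
    and "has_sq_schmidt dmu Mmub (normalized dmu (\<lambda>i. a ^ i))"
    and "has_sq_schmidt dla Mlab (normalized dla (\<lambda>i. a ^ (i * dmu)))"
  shows "LU_equiv (dmu * dla) (dmu * dla) (kron_mat Mmu Mla) (kron_mat Mmub Mlab)
         \<and> \<not> LU_equiv dmu dmu Mmu Mmub"
proof
  define Z1 where "Z1 = (\<Sum>i<dmu. a ^ (i * dla))"
  define Z2 where "Z2 = (\<Sum>j<dla. a ^ j)"
  define Z3 where "Z3 = (\<Sum>i<dmu. a ^ i)"
  define Z4 where "Z4 = (\<Sum>j<dla. a ^ (j * dmu))"
  define N where "N = dmu * dla"
  define Z where "Z = (\<Sum>k<N. a ^ k)"
  have Z12: "Z1 * Z2 = Z" unfolding Z1_def Z2_def Z_def N_def by (rule Zprod)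
  have Z34: "Z3 * Z4 = Z" unfolding Z3_def Z4_def Z_def N_def
    by (subst mult.commute, subst Zprod) (simp add: mult.commute add.commute)
  have pos: "0 < (\<Sum>i<d. a ^ f i)" if "0 < d" for d and f :: "nat \<Rightarrow> nat"
    using assms(4) that by (intro sum_pos) auto
  have Z1p: "0 < Z1" and Z3p: "0 < Z3" unfolding Z1_def Z3_def using pos[of dmu] assms(1) by auto
  show "\<not> LU_equiv dmu dmu Mmu Mmub"
  proof (rule not_LU[OF assms(6) assms(8)])
    show "\<forall>i<dmu. 0 \<le> normalized dmu (\<lambda>i. a ^ (i * dla)) i"
      using Z1p assms(4) by (auto simp: normalized_def Z1_def)
    show "\<forall>i<dmu. 0 \<le> normalized dmu (\<lambda>i. a ^ i) i"
      using Z3p assms(4) by (auto simp: normalized_def Z3_def)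
    show "0 < dmu" using assms(1) by simp
    have lt: "Z1 < Z3" unfolding Z1_def Z3_def using Zlt assms by blast
    show "\<forall>k<dmu. normalized dmu (\<lambda>i. a ^ i) k \<noteq> normalized dmu (\<lambda>i. a ^ (i * dla)) 0"
    proof (intro allI impI)
      fix k assume "k < dmu"
      have "a ^ k / Z3 \<le> 1 / Z3" using Z3p assms(4,5) by (intro divide_right_mono power_le_one) auto
      also have "\<dots> < 1 / Z1" using lt Z1p by (simp add: frac_less2)
      finally show "normalized dmu (\<lambda>i. a ^ i) k \<noteq> normalized dmu (\<lambda>i. a ^ (i * dla)) 0"
        by (simp add: normalized_def Z1_def Z3_def)
    qed
  qed
  show "LU_equiv (dmu * dla) (dmu * dla) (kron_mat Mmu Mla) (kron_mat Mmub Mlab)"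
  proof -
    obtain U1 V1 where U1: "unitary_mat dmu U1" and V1: "unitary_mat dmu V1" and
      M1: "Mmu = U1 * mat_diag dmu (\<lambda>i. complex_of_real (sqrt (normalized dmu (\<lambda>i. a ^ (i * dla)) i))) * transpose_mat V1"
      using assms(6) unfolding has_sq_schmidt_def by blast
    obtain U2 V2 where U2: "unitary_mat dla U2" and V2: "unitary_mat dla V2" and
      M2: "Mla = U2 * mat_diag dla (\<lambda>i. complex_of_real (sqrt (normalized dla (\<lambda>i. a ^ i) i))) * transpose_mat V2"
      using assms(7) unfolding has_sq_schmidt_def by blast
    obtain U3 V3 where U3: "unitary_mat dmu U3" and V3: "unitary_mat dmu V3" and
      M3: "Mmub = U3 * mat_diag dmu (\<lambda>i. complex_of_real (sqrt (normalized dmu (\<lambda>i. a ^ i) i))) * transpose_mat V3"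
      using assms(8) unfolding has_sq_schmidt_def by blast
    obtain U4 V4 where U4: "unitary_mat dla U4" and V4: "unitary_mat dla V4" and
      M4: "Mlab = U4 * mat_diag dla (\<lambda>i. complex_of_real (sqrt (normalized dla (\<lambda>i. a ^ (i * dmu)) i))) * transpose_mat V4"
      using assms(9) unfolding has_sq_schmidt_def by blast
    define g where "g = (\<lambda>k. complex_of_real (sqrt (a ^ k / Z)))"
    define \<sigma> where "\<sigma> = (\<lambda>k. k div dla + k mod dla * dmu)"
    define Dk where "Dk = mat_diag N g"
    define K1 where "K1 = kron_mat U1 U2"
    define K2 where "K2 = kron_mat V1 V2"
    define K3 where "K3 = kron_mat U3 U4"
    define K4 where "K4 = kron_mat V3 V4"
    define P where "P = perm_mat N \<sigma>"
    have bij: "bij_betw \<sigma> {..<N} {..<N}" unfolding \<sigma>_def N_def using sigma_bij[of dla dmu] assms(2) by simp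
    have K1u: "unitary_mat N K1" unfolding K1_def N_def by (rule unitary_kron[OF U1 U2])
    have K2u: "unitary_mat N K2" unfolding K2_def N_def by (rule unitary_kron[OF V1 V2])
    have K3u: "unitary_mat N K3" unfolding K3_def N_def by (rule unitary_kron[OF U3 U4])
    have K4u: "unitary_mat N K4" unfolding K4_def N_def by (rule unitary_kron[OF V3 V4])
    have Pu: "unitary_mat N P" unfolding P_def using perm_unitary bij by blast
    have e1: "kron_mat Mmu Mla = K1 * Dk * transpose_mat K2"
    proof -
      have "kron_mat Mmu Mla = K1 * kron_mat
          (mat_diag dmu (\<lambda>i. complex_of_real (sqrt (normalized dmu (\<lambda>i. a ^ (i * dla)) i))))
          (mat_diag dla (\<lambda>i. complex_of_real (sqrt (normalized dla (\<lambda>i. a ^ i) i)))) * transpose_mat K2"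
        unfolding M1 M2 K1_def K2_def by (rule kron_schmidt[OF U1 V1 U2 V2])
      also have "kron_mat
          (mat_diag dmu (\<lambda>i. complex_of_real (sqrt (normalized dmu (\<lambda>i. a ^ (i * dla)) i))))
          (mat_diag dla (\<lambda>i. complex_of_real (sqrt (normalized dla (\<lambda>i. a ^ i) i)))) = Dk"
        unfolding kron_diag Dk_def N_def
      proof (rule mat_diag_cong)
        fix k assume "k < dmu * dla"
        have "a ^ (k div dla * dla) * a ^ (k mod dla) = a ^ k"
          by (simp flip: power_add)
        then show "complex_of_real (sqrt (normalized dmu (\<lambda>i. a ^ (i * dla)) (k div dla))) *
          complex_of_real (sqrt (normalized dla (\<lambda>i. a ^ i) (k mod dla))) = g k"
          unfolding normalized_def g_def using assms(4)
          by (simp add: sqrt_prod Z1_def[symmetric] Z2_def[symmetric] Z12 N_def)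
      qed
      finally show ?thesis .
    qed
    have e2: "kron_mat Mmub Mlab = K3 * mat_diag N (\<lambda>k. g (\<sigma> k)) * transpose_mat K4"
    proof -
      have "kron_mat Mmub Mlab = K3 * kron_mat
          (mat_diag dmu (\<lambda>i. complex_of_real (sqrt (normalized dmu (\<lambda>i. a ^ i) i))))
          (mat_diag dla (\<lambda>i. complex_of_real (sqrt (normalized dla (\<lambda>i. a ^ (i * dmu)) i)))) * transpose_mat K4"
        unfolding M3 M4 K3_def K4_def by (rule kron_schmidt[OF U3 V3 U4 V4])
      also have "kron_mat
          (mat_diag dmu (\<lambda>i. complex_of_real (sqrt (normalized dmu (\<lambda>i. a ^ i) i))))
          (mat_diag dla (\<lambda>i. complex_of_real (sqrt (normalized dla (\<lambda>i. a ^ (i * dmu)) i)))) = mat_diag N (\<lambda>k. g (\<sigma> k))"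
        unfolding kron_diag N_def
      proof (rule mat_diag_cong)
        fix k assume "k < dmu * dla"
        have "a ^ (k div dla) * a ^ (k mod dla * dmu) = a ^ \<sigma> k"
          by (simp add: \<sigma>_def flip: power_add)
        then show "complex_of_real (sqrt (normalized dmu (\<lambda>i. a ^ i) (k div dla))) *
          complex_of_real (sqrt (normalized dla (\<lambda>i. a ^ (i * dmu)) (k mod dla))) = g (\<sigma> k)"
          unfolding normalized_def g_def using assms(4)
          by (simp add: sqrt_prod Z3_def[symmetric] Z4_def[symmetric] Z34 N_def)
      qed
      finally show ?thesis .
    qed
    have e3: "mat_diag N (\<lambda>k. g (\<sigma> k)) = P * Dk * transpose_mat P"
      unfolding P_def Dk_def using perm_diag[OF bij] by simp
    have c: "K1 \<in> carrier_mat N N" "K2 \<in> carrier_mat N N" "K3 \<in> carrier_mat N N" "K4 \<in> carrier_mat N N"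
      "P \<in> carrier_mat N N" "Dk \<in> carrier_mat N N"
      using K1u K2u K3u K4u Pu unitary_carrier by (auto simp: Dk_def)
    have T2u: "unitary_mat N (transpose_mat K2)" using unitary_transpose K2u by blast
    have c2: "adj_mat K1 \<in> carrier_mat N N" "adj_mat (transpose_mat K2) \<in> carrier_mat N N"
      "transpose_mat K2 \<in> carrier_mat N N" "transpose_mat K4 \<in> carrier_mat N N" "transpose_mat P \<in> carrier_mat N N"
      using c adj_carrier'[OF c(1)] adj_carrier'[of "transpose_mat K2" N N] by auto
    have Mk: "kron_mat Mmu Mla \<in> carrier_mat N N"
      unfolding N_def using assms(6,7) by (intro kron_carrier) (auto simp: has_sq_schmidt_def)
    have e4: "adj_mat K1 * kron_mat Mmu Mla * adj_mat (transpose_mat K2) = Dk"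
    proof -
      have "adj_mat K1 * kron_mat Mmu Mla * adj_mat (transpose_mat K2)
          = (adj_mat K1 * K1) * Dk * (transpose_mat K2 * adj_mat (transpose_mat K2))"
        unfolding e1 using c c2 by (simp add: assoc_mult_mat[of _ N N _ N _ N])
      then show ?thesis using c unitary_facts[OF K1u] unitary_facts[OF T2u]
        by (simp only: one_l one_r mult_cn)
    qed
    define U where "U = K3 * P * adj_mat K1"
    define V where "V = K4 * P * transpose_mat (adj_mat (transpose_mat K2))"
    have Uu: "unitary_mat N U" unfolding U_def by (rule unitary_mult[OF unitary_mult[OF K3u Pu] unitary_adj[OF K1u]])
    have Vu: "unitary_mat N V" unfolding V_def
      by (rule unitary_mult[OF unitary_mult[OF K4u Pu] unitary_transpose[OF unitary_adj[OF T2u]]])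
    have tV: "transpose_mat V = adj_mat (transpose_mat K2) * transpose_mat P * transpose_mat K4"
    proof -
      have "transpose_mat V = transpose_mat (transpose_mat (adj_mat (transpose_mat K2))) * transpose_mat (K4 * P)"
        unfolding V_def using c c2 by (intro transpose_mult[of _ N N]) auto
      also have "transpose_mat (K4 * P) = transpose_mat P * transpose_mat K4"
        using c by (intro transpose_mult[of _ N N]) auto
      finally show ?thesis using c c2 by (simp add: assoc_mult_mat[of _ N N _ N _ N])
    qed
    have "U * kron_mat Mmu Mla * transpose_mat V
        = K3 * P * (adj_mat K1 * kron_mat Mmu Mla * adj_mat (transpose_mat K2)) * transpose_mat P * transpose_mat K4"
      unfolding tV U_def using c c2 Mk by (simp add: assoc_mult_mat[of _ N N _ N _ N])
    also have "\<dots> = kron_mat Mmub Mlab" unfolding e4 e2 e3 using c c2 by (simp add: assoc_mult_mat[of _ N N _ N _ N])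
    finally show ?thesis unfolding LU_equiv_def N_def[symmetric] using Uu Vu by blast
  qed
qed

end
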